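(* There exists a sequence $S\in\{0,1\}^\omega$ such that for all $0<\alpha<1$, FS-depth$(S)\ge 1-\alpha$ and PD-depth$(S)<\alpha$.
   Context: $S\upharpoonright n$ is the length-$n$ prefix of $S$. A finite-state transducer (FST) is $T=(Q,q_0,\delta,\nu)$ with finite state set $Q$, start state $q_0$, $\delta:Q\times\{0,1\}\to Q$, $\nu:Q\times\{0,1\}\to\{0,1\}^*$; $T(\lambda)=\lambda$, $T(xb)=T(x)\nu(\hat\delta(x),b)$. FSTs are described by the following fixed binary representation $\sigma$. For $n\ge1$, $\mathrm{bin}(n)$ is the binary representation of $n$ and $\mathrm{string}(n)$ is $\mathrm{bin}(n)$ with its leading 1 removed. For $x=x_1\cdots x_l$, $x^\dagger=x_10x_20\cdots x_{l-1}0x_l1$, $x^\diamond=\overline{(1x)^\dagger}$ (bitwise complement), and $d(x)=x_1x_1\cdots x_lx_l$. For an FST with states $q_1,\dots,q_m$, write for $1\le i\le m$, $b\in\{0,1\}$, $t=2i-1+b$: $(\delta(q_i,b),\nu(q_i,b))=(q_{1+(n_t \bmod m)},\mathrm{string}(n'_t))$; its transition table is encoded as $\pi=\mathrm{bin}(n_1)^\ddagger\mathrm{string}(n'_1)^\diamond\cdots\mathrm{bin}(n_{2m})^\ddagger\mathrm{string}(n'_{2m})^\diamond$, where $\mathrm{bin}(n_t)^\ddagger$ is empty if the corresponding transition is a self-loop and $\mathrm{bin}(n_t)^\dagger$ otherwise. The string $d(\mathrm{bin}(i))01\pi$ describes that FST with start state $q_i$. $|T|$ is the length of the shortest description of $T$,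 $\mathrm{FST}^{\le k}=\{T:|T|\le k\}$, and $D^k(x)=\min\{|y|: T\in\mathrm{FST}^{\le k},\,T(y)=x\}$ ($\infty$ if no such $y$). FS-depth$(S)\ge\alpha$ means: for every $k\in\mathbb{N}$ there is $k'\in\mathbb{N}$ such that $D^k(S\upharpoonright n)-D^{k'}(S\upharpoonright n)\ge\alpha n$ for infinitely many $n$. A pushdown compressor (PDC) is $C=(Q,\Gamma,\delta,\nu,q_0,z_0,c)$ with finite state set, stack alphabet $\Gamma=\{0,1,z_0\}$ ($z_0$ bottom-of-stack, never removed), partial transition function $\delta: Q\times(\{0,1\}\cup\{\lambda\})\times\Gamma\to Q\times\Gamma^*$ (top stack symbol replaced by the given string), output function $\nu$ on the same domain into $\{0,1\}^*$, and $c$ bounding consecutive $\lambda$-transitions (reading no input, popping top symbol, outputting nothing); for each $q,a$ either $\delta(q,\lambda,a)$ or both $\delta(q,b,a)$ are undefined. $C(w)$ is the output on $w$ and $\delta_Q(w)$ the final state; $C$ is an ILPDC if $w\mapsto(C(w),\delta_Q(w))$ is injective. ILUPDCs are the same with stack alphabet $\{0,z_0\}$. PD-depth$(S)\ge\alpha$ means: for every ILUPDC $C$ there is an ILPDC $C'$ with $|C(S\upharpoonright n)|-|C'(S\upharpoonright n)|\ge\alpha n$ for all but finitely many $n$; PD-depth$(S)<\alpha$ means this fails. *)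

theory Defs
  imports Complex_Main "HOL-Library.Extended_Real"
begin

text \<open>Bits: False = 0, True = 1.  A sequence S in {0,1}^omega is a function nat => bool.\<close>

definition prefix_of :: "(nat \<Rightarrow> bool) \<Rightarrow> nat \<Rightarrow> bool list" where
  "prefix_of S n = map S [0..<n]"

fun bin :: "nat \<Rightarrow> bool list" where
  "bin n = (if n \<le> 1 then [True] else bin (n div 2) @ [odd n])"

definition bstring :: "nat \<Rightarrow> bool list" where
  "bstring n = tl (bin n)"

fun dagger :: "bool list \<Rightarrow> bool list" where
  "dagger [] = []"
| "dagger [x] = [x, True]"
| "dagger (x # xs) = x # False # dagger xs"

definition diamond :: "bool list \<Rightarrow> bool list" where
  "diamond x = map Not (dagger (True # x))"

definition dbl :: "bool list \<Rightarrow> bool list" where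
  "dbl x = concat (map (\<lambda>b. [b, b]) x)"

fun fst_out :: "(nat \<Rightarrow> bool \<Rightarrow> nat) \<Rightarrow> (nat \<Rightarrow> bool \<Rightarrow> bool list) \<Rightarrow> nat \<Rightarrow> bool list \<Rightarrow> bool list" where
  "fst_out delta nu q [] = []"
| "fst_out delta nu q (b # y) = nu q b @ fst_out delta nu (delta q b) y"

text \<open>The FST with states q_1..q_m (represented by 1..m), where for t = 2j-1+b
  we have delta(q_j,b) = q_{1 + (N t mod m)} and nu(q_j,b) = string(N' t).\<close>
definition fst_delta :: "nat \<Rightarrow> (nat \<Rightarrow> nat) \<Rightarrow> nat \<Rightarrow> bool \<Rightarrow> nat" where
  "fst_delta m N q b = 1 + N (2 * q - 1 + (if b then 1 else 0)) mod m"

definition fst_nu :: "(nat \<Rightarrow> nat) \<Rightarrow> nat \<Rightarrow> bool \<Rightarrow> bool list" where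
  "fst_nu N' q b = bstring (N' (2 * q - 1 + (if b then 1 else 0)))"

definition fst_fun :: "nat \<Rightarrow> nat \<Rightarrow> (nat \<Rightarrow> nat) \<Rightarrow> (nat \<Rightarrow> nat) \<Rightarrow> bool list \<Rightarrow> bool list" where
  "fst_fun m i N N' y = fst_out (fst_delta m N) (fst_nu N') i y"

text \<open>The transition table encoding pi; t ranges over 1..2m, the source state of
  transition t is q_{(t+1) div 2}; bin(N t) is omitted for self-loops.\<close>
definition fst_table :: "nat \<Rightarrow> (nat \<Rightarrow> nat) \<Rightarrow> (nat \<Rightarrow> nat) \<Rightarrow> bool list" where
  "fst_table m N N' = concat (map (\<lambda>t.
      (if 1 + N t mod m = (t + 1) div 2 then [] else dagger (bin (N t)))
      @ diamond (bstring (N' t))) [1..<2 * m + 1])"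

definition describes :: "bool list \<Rightarrow> nat \<Rightarrow> nat \<Rightarrow> (nat \<Rightarrow> nat) \<Rightarrow> (nat \<Rightarrow> nat) \<Rightarrow> bool" where
  "describes p m i N N' \<longleftrightarrow>
     1 \<le> m \<and> 1 \<le> i \<and> i \<le> m \<and>
     (\<forall>t\<in>{1..2 * m}. 1 \<le> N t \<and> 1 \<le> N' t) \<and>
     p = dbl (bin i) @ [False, True] @ fst_table m N N'"

text \<open>D^k(x): minimal length of an input y such that some FST with a description
  of length at most k maps y to x (infinity if there is none).\<close>
definition Dk :: "nat \<Rightarrow> bool list \<Rightarrow> ereal" where
  "Dk k x = (INF y \<in> {y. \<exists>p m i N N'. length p \<le> k \<and> describes p m i N N'
                              \<and> fst_fun m i N N' y = x}. ereal (real (length y)))"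

definition FS_depth_ge :: "(nat \<Rightarrow> bool) \<Rightarrow> real \<Rightarrow> bool" where
  "FS_depth_ge S \<alpha> \<longleftrightarrow>
     (\<forall>k. \<exists>k'. \<exists>\<^sub>\<infinity> n. Dk k (prefix_of S n) \<ge> Dk k' (prefix_of S n) + ereal (\<alpha> * real n))"

text \<open>Stack alphabet {0, 1, z0}; the top of the stack is the head of the list.
  Input symbol None stands for lambda.\<close>
datatype gamma = G0 | G1 | Z0

record pdc =
  pQ :: "nat set"
  pdelta :: "nat \<Rightarrow> bool option \<Rightarrow> gamma \<Rightarrow> (nat \<times> gamma list) option"
  pnu :: "nat \<Rightarrow> bool option \<Rightarrow> gamma \<Rightarrow> bool list"
  pq0 :: nat
  pc :: nat

type_synonym config = "nat \<times> gamma list"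

definition lstep :: "pdc \<Rightarrow> config \<Rightarrow> config option" where
  "lstep C cfg = (case snd cfg of [] \<Rightarrow> None
     | a # s \<Rightarrow> (case pdelta C (fst cfg) None a of None \<Rightarrow> None
                 | Some (q', u) \<Rightarrow> Some (q', u @ s)))"

definition istep :: "pdc \<Rightarrow> bool \<Rightarrow> config \<Rightarrow> (config \<times> bool list) option" where
  "istep C b cfg = (case snd cfg of [] \<Rightarrow> None
     | a # s \<Rightarrow> (case pdelta C (fst cfg) (Some b) a of None \<Rightarrow> None
                 | Some (q', u) \<Rightarrow> Some ((q', u @ s), pnu C (fst cfg) (Some b) a)))"

fun lclose :: "pdc \<Rightarrow> nat \<Rightarrow> config \<Rightarrow> config" where
  "lclose C 0 cfg = cfg"
| "lclose C (Suc k) cfg = (case lstep C cfg of None \<Rightarrow> cfg | Some cfg' \<Rightarrow> lclose C k cfg')"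

fun runfrom :: "pdc \<Rightarrow> config \<Rightarrow> bool list \<Rightarrow> (config \<times> bool list) option" where
  "runfrom C cfg [] = Some (cfg, [])"
| "runfrom C cfg (b # w) = (case istep C b cfg of None \<Rightarrow> None
     | Some (cfg', out) \<Rightarrow> (case runfrom C (lclose C (pc C) cfg') w of None \<Rightarrow> None
          | Some (cf, out') \<Rightarrow> Some (cf, out @ out')))"

definition pd_run :: "pdc \<Rightarrow> bool list \<Rightarrow> (config \<times> bool list) option" where
  "pd_run C w = runfrom C (lclose C (pc C) (pq0 C, [Z0])) w"

definition pd_out :: "pdc \<Rightarrow> bool list \<Rightarrow> bool list" where
  "pd_out C w = snd (the (pd_run C w))"

definition pd_state :: "pdc \<Rightarrow> bool list \<Rightarrow> nat" where
  "pd_state C w = fst (fst (the (pd_run C w)))"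

inductive_set pre_reach :: "pdc \<Rightarrow> config set" for C where
  init: "(pq0 C, [Z0]) \<in> pre_reach C"
| step: "cfg \<in> pre_reach C \<Longrightarrow> istep C b (lclose C (pc C) cfg) = Some (cfg', out)
          \<Longrightarrow> cfg' \<in> pre_reach C"

definition is_pdc :: "pdc \<Rightarrow> bool" where
  "is_pdc C \<longleftrightarrow>
     finite (pQ C) \<and> pq0 C \<in> pQ C \<and>
     (\<forall>q x a. q \<notin> pQ C \<longrightarrow> pdelta C q x a = None) \<and>
     (\<forall>q x a q' u. pdelta C q x a = Some (q', u) \<longrightarrow> q' \<in> pQ C) \<and>
     \<comment> \<open>z0 stays at the bottom and is never removed\<close>
     (\<forall>q x q' u. pdelta C q x Z0 = Some (q', u) \<longrightarrow>
          u \<noteq> [] \<and> last u = Z0 \<and> Z0 \<notin> set (butlast u)) \<and>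
     (\<forall>q x a q' u. a \<noteq> Z0 \<longrightarrow> pdelta C q x a = Some (q', u) \<longrightarrow> Z0 \<notin> set u) \<and>
     \<comment> \<open>lambda-transitions read nothing, pop the top symbol, output nothing\<close>
     (\<forall>q a q' u. pdelta C q None a = Some (q', u) \<longrightarrow> a \<noteq> Z0 \<and> u = [] \<and> pnu C q None a = []) \<and>
     \<comment> \<open>determinism\<close>
     (\<forall>q a b. pdelta C q None a \<noteq> None \<longrightarrow> pdelta C q (Some b) a = None) \<and>
     \<comment> \<open>c bounds the number of consecutive lambda-transitions\<close>
     (\<forall>cfg \<in> pre_reach C. lstep C (lclose C (pc C) cfg) = None) \<and>
     \<comment> \<open>the output C(w) is defined for every input w\<close>
     (\<forall>w. pd_run C w \<noteq> None)"

definition is_ILPDC :: "pdc \<Rightarrow> bool" where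
  "is_ILPDC C \<longleftrightarrow> is_pdc C \<and> inj (\<lambda>w. (pd_out C w, pd_state C w))"

text \<open>Unary: stack alphabet {0, z0}.\<close>
definition is_ILUPDC :: "pdc \<Rightarrow> bool" where
  "is_ILUPDC C \<longleftrightarrow> is_ILPDC C \<and> (\<forall>q x a q' u. pdelta C q x a = Some (q', u) \<longrightarrow> G1 \<notin> set u)"

definition PD_depth_ge :: "(nat \<Rightarrow> bool) \<Rightarrow> real \<Rightarrow> bool" where
  "PD_depth_ge S \<alpha> \<longleftrightarrow>
     (\<forall>C. is_ILUPDC C \<longrightarrow> (\<exists>C'. is_ILPDC C' \<and>
        (\<forall>\<^sub>F n in sequentially. real (length (pd_out C (prefix_of S n)))
             - real (length (pd_out C' (prefix_of S n))) \<ge> \<alpha> * real n)))"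

end

theory Submission
  imports Defs "HOL-Library.Sublist" "HOL-Library.Countable"
begin


lemma length_dagger: "length (dagger xs) = 2 * length xs"
  by (induction xs rule: dagger.induct) auto

fun fstate :: "(nat \<Rightarrow> bool \<Rightarrow> nat) \<Rightarrow> nat \<Rightarrow> bool list \<Rightarrow> nat" where
  "fstate d q [] = q"
| "fstate d q (b # y) = fstate d (d q b) y"

lemma fst_out_append: "fst_out d n q (y1 @ y2) = fst_out d n q y1 @ fst_out d n (fstate d q y1) y2"
  by (induction y1 arbitrary: q) auto

lemma fstate_in: "(\<forall>q\<in>Qs. \<forall>b. d q b \<in> Qs) \<Longrightarrow> q \<in> Qs \<Longrightarrow> fstate d q y \<in> Qs"
  by (induction y arbitrary: q) auto

lemma fst_out_cong:
  assumes "\<forall>q\<in>Qs. \<forall>b. d q b = d' q b \<and> d q b \<in> Qs \<and> n q b = n' q b" "q \<in> Qs"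
  shows "fst_out d n q y = fst_out d' n' q y"
  using assms(2)
proof (induction y arbitrary: q)
  case (Cons b y)
  then have "d q b \<in> Qs" "d q b = d' q b" "n q b = n' q b" using assms(1) by blast+
  then show ?case using Cons by simp
qed simp

lemma split_out:
  assumes "\<forall>q\<in>Qs. \<forall>b. d q b \<in> Qs \<and> length (n q b) \<le> K" "q \<in> Qs"
    "L \<le> length (fst_out d n q y)" "0 < L"
  shows "\<exists>y1 y2. y = y1 @ y2 \<and> L \<le> length (fst_out d n q y1) \<and> length (fst_out d n q y1) < L + K"
  using assms(2-)
proof (induction y arbitrary: q L)
  case Nil
  then show ?case by simp
next
  case (Cons b y)
  show ?case
  proof (cases "L \<le> length (n q b)")
    case True
    then have "b # y = [b] @ y \<and> L \<le> length (fst_out d n q [b]) \<and> length (fst_out d n q [b]) < L + K"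
    proof -
      have "length (n q b) \<le> K" using assms(1) Cons.prems by blast
      then show ?thesis using True Cons.prems by simp
    qed
    then show ?thesis by blast
  next
    case False
    then have "L - length (n q b) \<le> length (fst_out d n (d q b) y)" "0 < L - length (n q b)"
      using Cons.prems by auto
    from Cons.IH[OF _ this] Cons.prems assms(1) obtain y1 y2 where
      "y = y1 @ y2" "L - length (n q b) \<le> length (fst_out d n (d q b) y1)"
      "length (fst_out d n (d q b) y1) < L - length (n q b) + K" by blast
    then have "b # y = (b # y1) @ y2 \<and> L \<le> length (fst_out d n q (b # y1)) \<and> length (fst_out d n q (b # y1)) < L + K"
      using False by auto
    then show ?thesis by blast
  qed
qed

lemma prefix_app_short: "prefix xs (ys @ zs) \<Longrightarrow> length xs \<le> length ys \<Longrightarrow> prefix xs ys"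
  by (auto simp: prefix_append)

lemma main_lower:
  assumes cl: "\<forall>q\<in>Qs. \<forall>b. d q b \<in> Qs \<and> length (n q b) \<le> K"
    and H: "\<forall>q\<in>Qs. \<forall>y j. j < K \<longrightarrow> prefix (drop j u) (fst_out d n q y) \<longrightarrow> c \<le> length y"
    and Ku: "K \<le> length u"
  shows "q \<in> Qs \<Longrightarrow> j < K \<Longrightarrow> prefix (drop j (concat (replicate r u))) (fst_out d n q y) \<Longrightarrow> r * c \<le> length y"
proof (induction r arbitrary: q j y)
  case 0
  then show ?case by simp
next
  case (Suc r)
  let ?L = "length u - j"
  have dr: "drop j (concat (replicate (Suc r) u)) = drop j u @ concat (replicate r u)"
    using Suc.prems Ku by simp
  have L0: "0 < ?L" using Suc.prems Ku by simp
  have pf: "prefix (drop j u) (fst_out d n q y)" using Suc.prems(3) unfolding dr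
    using append_prefixD by blast
  have "?L \<le> length (fst_out d n q y)" using prefix_length_le[OF pf] by simp
  from split_out[OF cl Suc.prems(1) this L0] obtain y1 y2 where
    sp: "y = y1 @ y2" "?L \<le> length (fst_out d n q y1)" "length (fst_out d n q y1) < ?L + K" by blast
  let ?o1 = "fst_out d n q y1"
  let ?q1 = "fstate d q y1"
  have oy: "fst_out d n q y = ?o1 @ fst_out d n ?q1 y2" using sp(1) fst_out_append by blast
  have p1: "prefix (drop j u) ?o1"
    using prefix_app_short[of "drop j u" ?o1 "fst_out d n ?q1 y2"] pf oy sp(2) by simp
  have c1: "c \<le> length y1" using H Suc.prems(1,2) p1 by blast
  define j' where "j' = length ?o1 - ?L"
  have j'K: "j' < K" using sp unfolding j'_def by linarith
  have q1: "?q1 \<in> Qs" using fstate_in cl Suc.prems(1) by blast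
  obtain z where z: "fst_out d n q y = drop j (concat (replicate (Suc r) u)) @ z"
    using Suc.prems(3) prefix_def by blast
  have "fst_out d n ?q1 y2 = drop (length ?o1) (fst_out d n q y)" using oy by simp
  also have "\<dots> = drop (length ?o1) (drop j u @ (concat (replicate r u) @ z))" using z dr by simp
  also have "\<dots> = drop j' (concat (replicate r u) @ z)" using sp(2) unfolding j'_def by simp
  also have "\<dots> = drop j' (concat (replicate r u)) @ drop (j' - length (concat (replicate r u))) z" by simp
  finally have "prefix (drop j' (concat (replicate r u))) (fst_out d n ?q1 y2)" by simp
  from Suc.IH[OF q1 j'K this] have "r * c \<le> length y2" .
  then show ?case using c1 sp(1) by simp
qed



lemma len_concat_ge2: "(\<forall>x\<in>set xs. 2 \<le> length (f x)) \<Longrightarrow> 2 * length xs \<le> length (concat (map f xs))"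
  by (induction xs) auto

lemma len_concat_elem: "x \<in> set xs \<Longrightarrow> length (f x) \<le> length (concat (map f xs))"
  by (induction xs) auto

lemma length_diamond: "length (diamond x) = 2 * length x + 2"
  by (simp add: diamond_def length_dagger del: dagger.simps)

lemma describes_bounds:
  assumes "describes p m i N N'" "length p \<le> K"
  shows "1 \<le> m" "m \<le> K" "\<And>t. t \<in> {1..2*m} \<Longrightarrow> length (bstring (N' t)) \<le> K"
proof -
  let ?f = "\<lambda>t. (if 1 + N t mod m = (t + 1) div 2 then [] else dagger (bin (N t)))
      @ diamond (bstring (N' t))"
  have tab: "fst_table m N N' = concat (map ?f [1..<2 * m + 1])" by (simp add: fst_table_def)
  have lp: "length (fst_table m N N') \<le> K" using assms unfolding describes_def by auto
  show "1 \<le> m" using assms unfolding describes_def by auto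
  have "2 * length [1..<2 * m + 1] \<le> length (fst_table m N N')"
    unfolding tab by (rule len_concat_ge2) (simp add: length_diamond)
  moreover have "length [1..<2 * m + 1] = 2 * m" by simp
  ultimately show "m \<le> K" using lp by linarith
  fix t assume t: "t \<in> {1..2*m}"
  then have "t \<in> set [1..<2 * m + 1]" by auto
  from len_concat_elem[OF this, of ?f] have "length (?f t) \<le> length (fst_table m N N')" unfolding tab .
  then show "length (bstring (N' t)) \<le> K" using lp by (simp add: length_diamond)
qed

definition gdelta :: "nat list \<Rightarrow> nat \<Rightarrow> bool \<Rightarrow> nat" where
  "gdelta fl q b = 1 + fl ! (2*q - 2 + (if b then 1 else 0))"
definition gnu :: "bool list list \<Rightarrow> nat \<Rightarrow> bool \<Rightarrow> bool list" where
  "gnu gl q b = gl ! (2*q - 2 + (if b then 1 else 0))"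
definition FL :: "nat \<Rightarrow> nat list set" where
  "FL K = {xs. set xs \<subseteq> {0..<K} \<and> length xs = 2*K}"
definition GL :: "nat \<Rightarrow> bool list list set" where
  "GL K = {xs. set xs \<subseteq> {ys. length ys \<le> K} \<and> length xs = 2*K}"
definition Th :: "nat \<Rightarrow> (nat \<times> nat list \<times> bool list list) set" where
  "Th K = {1..K} \<times> FL K \<times> GL K"
fun gout :: "nat \<times> nat list \<times> bool list list \<Rightarrow> bool list \<Rightarrow> bool list" where
  "gout (q, fl, gl) y = fst_out (gdelta fl) (gnu gl) q y"

lemma finite_bl_le: "finite {ys :: bool list. length ys \<le> K}"
  using finite_lists_length_le[of "UNIV :: bool set" K] by simp

lemma finite_Th: "finite (Th K)"
proof -
  have "finite (FL K)" unfolding FL_def by (rule finite_lists_length_eq) simp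
  moreover have "finite (GL K)" unfolding GL_def by (rule finite_lists_length_eq) (rule finite_bl_le)
  ultimately show ?thesis unfolding Th_def by simp
qed

lemma real_to_generic:
  assumes d: "describes p m i N N'" and lp: "length p \<le> K" and q: "q \<in> {1..m}"
  defines "fl \<equiv> map (\<lambda>t. N t mod m) [1..<2*K+1]"
      and "gl \<equiv> map (\<lambda>t. if t \<le> 2*m then bstring (N' t) else []) [1..<2*K+1]"
  shows "(q, fl, gl) \<in> Th K" "fst_out (fst_delta m N) (fst_nu N') q y = gout (q, fl, gl) y"
proof -
  note bd = describes_bounds[OF d lp]
  have "\<And>t. N t mod m < K" using bd(1,2) by (meson mod_less_divisor order_less_le_trans zero_less_one_class.zero_le_one less_le_trans le_less_trans  linorder_not_le not_one_le_zero)
  then have "set fl \<subseteq> {0..<K}" unfolding fl_def by auto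
  moreover have "set gl \<subseteq> {ys. length ys \<le> K}" unfolding gl_def using bd(3) by auto
  moreover have "length fl = 2*K" "length gl = 2*K" unfolding fl_def gl_def by simp_all
  ultimately show "(q, fl, gl) \<in> Th K" using q bd(2) unfolding Th_def FL_def GL_def by simp
  have "\<forall>q\<in>{1..m}. \<forall>b. fst_delta m N q b = gdelta fl q b \<and> fst_delta m N q b \<in> {1..m}
           \<and> fst_nu N' q b = gnu gl q b"
  proof (intro ballI allI)
    fix q b assume q: "q \<in> {1..m}"
    define t0 where "t0 = 2*q - 2 + (if b then 1 else 0)"
    have t0: "t0 < 2*K" "Suc t0 = 2 * q - 1 + (if b then 1 else 0)" "Suc t0 \<le> 2*m"
      using q bd(2) unfolding t0_def by auto
    have "fl ! t0 = N (Suc t0) mod m" unfolding fl_def using t0(1) by (simp add: nth_upt del: upt_Suc)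
    moreover have "gl ! t0 = bstring (N' (Suc t0))" unfolding gl_def using t0 by (simp add: nth_upt del: upt_Suc)
    moreover have "1 + N (Suc t0) mod m \<in> {1..m}"
    proof -
      have "N (Suc t0) mod m < m" using bd(1) by simp
      then show ?thesis by simp
    qed
    ultimately show "fst_delta m N q b = gdelta fl q b \<and> fst_delta m N q b \<in> {1..m}
           \<and> fst_nu N' q b = gnu gl q b"
      unfolding fst_delta_def gdelta_def fst_nu_def gnu_def t0_def[symmetric] t0(2)[symmetric] by simp
  qed
  from fst_out_cong[OF this q] show "fst_out (fst_delta m N) (fst_nu N') q y = gout (q, fl, gl) y" by simp
qed



declare bin.simps[simp del]

lemma bin1: "bin (Suc 0) = [True]" by (subst bin.simps) simp

lemma finite_bl_eq: "finite {xs :: bool list. length xs = n}"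
  using finite_lists_length_eq[of "UNIV :: bool set" n] by simp

lemma card_bl_eq: "card {xs :: bool list. length xs = n} = 2^n"
  using card_lists_length_eq[of "UNIV :: bool set" n] by (simp add: card_UNIV_bool)

lemma finite_bl_lt: "finite {xs :: bool list. length xs < n}"
  by (rule finite_subset[OF _ finite_bl_le[of n]]) auto

lemma card_bl_lt: "card {xs :: bool list. length xs < n} \<le> 2^n"
proof (induction n)
  case 0
  then show ?case by simp
next
  case (Suc n)
  have "{xs :: bool list. length xs < Suc n} = {xs. length xs < n} \<union> {xs. length xs = n}" by auto
  then have "card {xs :: bool list. length xs < Suc n} \<le> card {xs :: bool list. length xs < n} + card {xs :: bool list. length xs = n}"
    by (simp add: card_Un_le)
  then show ?case using Suc card_bl_eq[of n] by simp
qed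

definition hard :: "nat \<Rightarrow> nat \<Rightarrow> bool list \<Rightarrow> bool" where
  "hard K c u \<longleftrightarrow> (\<forall>\<theta>\<in>Th K. \<forall>y j. j < K \<longrightarrow> prefix (drop j u) (gout \<theta> y) \<longrightarrow> c \<le> length y)"

definition Bk :: "nat \<Rightarrow> nat" where
  "Bk K = card (Th K) * K * 2^K"

lemma exists_hard:
  assumes "K \<le> Bk K + c"
  shows "\<exists>u. length u = Bk K + c \<and> hard K c u"
proof (rule ccontr)
  assume na: "\<not> ?thesis"
  define l where "l = Bk K + c"
  define F where "F = (\<lambda>(\<theta>, y, j, a). a @ take (l - j) (gout \<theta> y))"
  define D where "D = Th K \<times> {y :: bool list. length y < c} \<times> {..<K} \<times> {a :: bool list. length a < K}"
  have sub: "{u :: bool list. length u = l} \<subseteq> F ` D"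
  proof
    fix u :: "bool list" assume "u \<in> {u. length u = l}"
    then have lu: "length u = l" by simp
    then have "\<not> hard K c u" using na l_def by blast
    then obtain \<theta> y j where th: "\<theta> \<in> Th K" "j < K" "prefix (drop j u) (gout \<theta> y)" "length y < c"
      unfolding hard_def by force
    have jl: "j \<le> l" using th(2) assms l_def by simp
    obtain z where z: "gout \<theta> y = drop j u @ z" using th(3) prefix_def by blast
    have "take (l - j) (gout \<theta> y) = drop j u" using z lu by simp
    then have "u = F (\<theta>, y, j, take j u)" unfolding F_def by simp
    moreover have "(\<theta>, y, j, take j u) \<in> D" unfolding D_def using th jl lu by auto
    ultimately show "u \<in> F ` D" by blast
  qed
  have fD: "finite D" unfolding D_def using finite_Th finite_bl_lt by simp
  have "card D = card (Th K) * (card {y :: bool list. length y < c} * (K * card {a :: bool list. length a < K}))"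
    unfolding D_def by (simp add: card_cartesian_product)
  also have "\<dots> \<le> card (Th K) * (2^c * (K * 2^K))"
    using card_bl_lt[of c] card_bl_lt[of K] by (intro mult_le_mono order.refl) auto
  also have "\<dots> = Bk K * 2^c" unfolding Bk_def by simp
  also have "\<dots> < 2^(Bk K) * 2^c" by simp
  also have "\<dots> = 2^l" unfolding l_def by (simp add: power_add)
  finally have "card D < 2^l" .
  moreover have "2^l \<le> card (F ` D)" using card_mono[OF finite_imageI[OF fD] sub] card_bl_eq[of l] by simp
  moreover have "card (F ` D) \<le> card D" by (rule card_image_le[OF fD])
  ultimately show False by simp
qed

definition num :: "bool list \<Rightarrow> nat" where
  "num xs = foldl (\<lambda>n b. 2*n + (if b then 1 else 0)) 1 xs"

lemma num_snoc: "num (xs @ [b]) = 2 * num xs + (if b then 1 else 0)"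
  by (simp add: num_def)

lemma num_ge1: "1 \<le> num xs"
  by (induction xs rule: rev_induct) (auto simp: num_snoc, simp add: num_def)

lemma bin_num: "bin (num xs) = True # xs"
proof (induction xs rule: rev_induct)
  case Nil
  then show ?case by (simp add: num_def bin1)
next
  case (snoc b xs)
  have g: "\<not> num (xs @ [b]) \<le> 1" using num_ge1[of xs] by (simp add: num_snoc)
  have "bin (num (xs @ [b])) = bin (num (xs @ [b]) div 2) @ [odd (num (xs @ [b]))]"
    using g by (subst bin.simps) simp
  also have "num (xs @ [b]) div 2 = num xs" by (simp add: num_snoc)
  also have "odd (num (xs @ [b])) = b" by (simp add: num_snoc)
  finally show ?case using snoc by simp
qed

lemma bstring_num[simp]: "bstring (num xs) = xs"
  unfolding bstring_def bin_num by simp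

definition N3 :: "nat \<Rightarrow> nat" where
  "N3 t = (if t = 1 then 1 else if t = 2 then 2 else if t = 3 \<or> t = 4 then 3 else 2)"

definition N3' :: "bool list \<Rightarrow> nat \<Rightarrow> nat" where
  "N3' u t = (if t = 3 then num [False] else if t = 4 then num [True]
     else if t = 5 \<or> t = 6 then num u else num [])"

definition descU :: "bool list \<Rightarrow> bool list" where
  "descU u = dbl (bin 1) @ [False, True] @ fst_table 3 N3 (N3' u)"

lemma describes_U: "describes (descU u) 3 1 N3 (N3' u)"
  unfolding describes_def descU_def using num_ge1 by (auto simp: N3_def N3'_def)

definition lit :: "bool list \<Rightarrow> bool list" where
  "lit v = concat (map (\<lambda>b. [False, b]) v)"

lemma d3: "fst_delta 3 N3 (Suc 0) False = 2" "fst_delta 3 N3 (Suc 0) True = 3"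
  "fst_delta 3 N3 2 b = 1" "fst_delta 3 N3 3 b = 3"
  by (auto simp: fst_delta_def N3_def)

lemma n3: "fst_nu (N3' u) (Suc 0) b = []" "fst_nu (N3' u) 2 b = [b]" "fst_nu (N3' u) 3 b = u"
  by (auto simp: fst_nu_def N3'_def)

lemma out_lit: "fst_out (fst_delta 3 N3) (fst_nu (N3' u)) 1 (lit v @ z) = v @ fst_out (fst_delta 3 N3) (fst_nu (N3' u)) 1 z"
  by (induction v) (auto simp: lit_def d3 n3)

lemma out_U: "fst_out (fst_delta 3 N3) (fst_nu (N3' u)) 3 (replicate r False) = concat (replicate r u)"
  by (induction r) (auto simp: d3 n3)

lemma fst_fun_U: "fst_fun 3 1 N3 (N3' u) (lit v @ True # replicate r False) = v @ concat (replicate r u)"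
  unfolding fst_fun_def out_lit by (simp add: d3 n3 out_U)

lemma length_lit: "length (lit v) = 2 * length v"
  by (induction v) (auto simp: lit_def)

lemma Dk_upper: "Dk (length (descU u)) (v @ concat (replicate r u)) \<le> ereal (real (2 * length v + 1 + r))"
proof -
  let ?y = "lit v @ True # replicate r False"
  have "?y \<in> {y. \<exists>p m i N N'. length p \<le> length (descU u) \<and> describes p m i N N'
                              \<and> fst_fun m i N N' y = v @ concat (replicate r u)}"
    using describes_U fst_fun_U by blast
  then have "Dk (length (descU u)) (v @ concat (replicate r u)) \<le> ereal (real (length ?y))"
    unfolding Dk_def by (rule INF_lower)
  also have "length ?y = 2 * length v + 1 + r" by (simp add: length_lit)
  finally show ?thesis .
qed



lemma Dk_lower:
  assumes hd: "hard K c u" and Ku: "K \<le> length u" and kK: "k \<le> K" and K1: "1 \<le> K"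
  shows "ereal (real (r * c)) \<le> Dk k (v @ concat (replicate r u))"
  unfolding Dk_def
proof (rule INF_greatest)
  fix y assume "y \<in> {y. \<exists>p m i N N'. length p \<le> k \<and> describes p m i N N'
                              \<and> fst_fun m i N N' y = v @ concat (replicate r u)}"
  then obtain p m i N N' where pd: "length p \<le> k" "describes p m i N N'"
    "fst_fun m i N N' y = v @ concat (replicate r u)" by blast
  have lpK: "length p \<le> K" using pd(1) kK by simp
  define d where "d = fst_delta m N"
  define n where "n = fst_nu N'"
  note bd = describes_bounds[OF pd(2) lpK]
  have cl: "\<forall>q\<in>{1..m}. \<forall>b. d q b \<in> {1..m} \<and> length (n q b) \<le> K"
  proof (intro ballI allI)
    fix q b assume q: "q \<in> {1..m}"
    have "N (2 * q - 1 + (if b then 1 else 0)) mod m < m" using bd(1) by simp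
    then have "d q b \<in> {1..m}" unfolding d_def fst_delta_def by simp
    moreover have "2 * q - 1 + (if b then 1 else 0) \<in> {1..2*m}" using q by auto
    then have "length (n q b) \<le> K" unfolding n_def fst_nu_def using bd(3) by blast
    ultimately show "d q b \<in> {1..m} \<and> length (n q b) \<le> K" by simp
  qed
  have H: "\<forall>q\<in>{1..m}. \<forall>y j. j < K \<longrightarrow> prefix (drop j u) (fst_out d n q y) \<longrightarrow> c \<le> length y"
  proof (intro ballI allI impI)
    fix q y j assume q: "q \<in> {1..m}" and j: "j < K" and pf: "prefix (drop j u) (fst_out d n q y)"
    obtain \<theta> where th: "\<theta> \<in> Th K" "\<And>y. fst_out d n q y = gout \<theta> y"
      using real_to_generic[OF pd(2) lpK q] unfolding d_def n_def by blast
    have "prefix (drop j u) (gout \<theta> y)" using pf th(2) by simp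
    then show "c \<le> length y" using hd th(1) j unfolding hard_def by blast
  qed
  have i: "i \<in> {1..m}" using pd(2) unfolding describes_def by auto
  have out: "fst_out d n i y = v @ concat (replicate r u)" using pd(3) unfolding fst_fun_def d_def n_def .
  have "r * c \<le> length y"
  proof (cases "v = []")
    case True
    then have "prefix (drop 0 (concat (replicate r u))) (fst_out d n i y)" using out by simp
    from main_lower[OF cl H Ku i _ this] K1 show ?thesis by simp
  next
    case False
    have "length v \<le> length (fst_out d n i y)" "0 < length v" using out False by auto
    from split_out[OF cl i this] obtain y1 y2 where
      sp: "y = y1 @ y2" "length v \<le> length (fst_out d n i y1)" "length (fst_out d n i y1) < length v + K" by blast
    let ?o1 = "fst_out d n i y1"
    let ?q1 = "fstate d i y1"
    define j' where "j' = length ?o1 - length v"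
    have j'K: "j' < K" using sp unfolding j'_def by linarith
    have q1: "?q1 \<in> {1..m}" using fstate_in cl i by blast
    have "fst_out d n ?q1 y2 = drop (length ?o1) (fst_out d n i y)" using sp(1) fst_out_append by simp
    also have "\<dots> = drop j' (concat (replicate r u))" using out sp(2) unfolding j'_def by simp
    finally have "prefix (drop j' (concat (replicate r u))) (fst_out d n ?q1 y2)" by simp
    from main_lower[OF cl H Ku q1 j'K this] have "r * c \<le> length y2" .
    then show ?thesis using sp(1) by simp
  qed
  then show "ereal (real (r * c)) \<le> ereal (real (length y))" by (metis ereal_less_eq(3) of_nat_le_iff)
qed



definition Cid :: pdc where
  "Cid = \<lparr>pQ = {0}, pdelta = (\<lambda>q x a. if q = 0 \<and> x \<noteq> None \<and> a = Z0 then Some (0, [Z0]) else None),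
          pnu = (\<lambda>q x a. case x of Some b \<Rightarrow> [b] | None \<Rightarrow> []), pq0 = 0, pc = 0\<rparr>"

lemma Cid_simps: "pQ Cid = {0}" "pdelta Cid q x a = (if q = 0 \<and> x \<noteq> None \<and> a = Z0 then Some (0, [Z0]) else None)"
  "pnu Cid q x a = (case x of Some b \<Rightarrow> [b] | None \<Rightarrow> [])" "pq0 Cid = 0" "pc Cid = 0"
  by (simp_all add: Cid_def)

lemma runfrom_Cid: "runfrom Cid (0, [Z0]) w = Some ((0, [Z0]), w)"
  by (induction w) (auto simp: istep_def Cid_def)

lemma pd_run_Cid: "pd_run Cid w = Some ((0, [Z0]), w)"
  unfolding pd_run_def using runfrom_Cid by (simp add: Cid_def)

lemma pd_out_Cid: "pd_out Cid w = w"
  by (simp add: pd_out_def pd_run_Cid)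

lemma ILUPDC_Cid: "is_ILUPDC Cid"
proof -
  have "is_pdc Cid"
    unfolding is_pdc_def
    by (auto simp: Cid_simps lstep_def pd_run_Cid split: list.splits)
  moreover have "inj (\<lambda>w. (pd_out Cid w, pd_state Cid w))"
    by (rule injI) (simp add: pd_out_Cid)
  ultimately show ?thesis unfolding is_ILUPDC_def is_ILPDC_def by (auto simp: Cid_def)
qed

lemma lclose_in:
  assumes "\<forall>q x a q' u. pdelta C q x a = Some (q', u) \<longrightarrow> q' \<in> pQ C"
  shows "fst cfg \<in> pQ C \<Longrightarrow> fst (lclose C k cfg) \<in> pQ C"
proof (induction k arbitrary: cfg)
  case (Suc k)
  show ?case
  proof (cases "lstep C cfg")
    case None then show ?thesis using Suc by simp
  next
    case (Some cfg')
    have "fst cfg' \<in> pQ C" using Some assms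
      by (auto simp: lstep_def split: list.splits option.splits; blast)
    then show ?thesis using Some Suc.IH by simp
  qed
qed simp

lemma runfrom_in:
  assumes "\<forall>q x a q' u. pdelta C q x a = Some (q', u) \<longrightarrow> q' \<in> pQ C"
  shows "fst cfg \<in> pQ C \<Longrightarrow> runfrom C cfg w = Some (cf, ou) \<Longrightarrow> fst cf \<in> pQ C"
proof (induction w arbitrary: cfg cf ou)
  case Nil then show ?case by simp
next
  case (Cons b w)
  obtain cfg' o1 where st: "istep C b cfg = Some (cfg', o1)"
    using Cons.prems by (auto split: option.splits)
  have "fst cfg' \<in> pQ C" using st assms
    by (auto simp: istep_def split: list.splits option.splits; blast)
  then have l: "fst (lclose C (pc C) cfg') \<in> pQ C" by (rule lclose_in[OF assms])
  obtain cf' o2 where r: "runfrom C (lclose C (pc C) cfg') w = Some (cf', o2)" "cf = cf'"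
    using Cons.prems st by (auto split: option.splits)
  show ?case using Cons.IH[OF l r(1)] r(2) by simp
qed

lemma pd_state_in: "is_pdc C \<Longrightarrow> pd_state C w \<in> pQ C"
proof -
  assume c: "is_pdc C"
  have a1: "\<forall>q x a q' u. pdelta C q x a = Some (q', u) \<longrightarrow> q' \<in> pQ C" using c unfolding is_pdc_def by argo
  have a2: "pq0 C \<in> pQ C" using c unfolding is_pdc_def by argo
  have a3: "\<forall>w. pd_run C w \<noteq> None" using c unfolding is_pdc_def by argo
  note a = a1 a2 a3[rule_format, of w]
  then obtain cf ou where r: "pd_run C w = Some (cf, ou)" by auto
  have "fst (lclose C (pc C) (pq0 C, [Z0])) \<in> pQ C" using lclose_in[OF a(1)] a(2) by simp
  from runfrom_in[OF a(1) this] r show ?thesis unfolding pd_state_def pd_run_def by simp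
qed



instance gamma :: countable by countable_datatype

definition beh :: "pdc \<Rightarrow> bool list \<Rightarrow> bool list \<times> nat" where
  "beh C = (\<lambda>w. (pd_out C w, pd_state C w))"

definition normC :: "pdc \<Rightarrow> pdc" where
  "normC C = C\<lparr>pnu := (\<lambda>q x a. if pdelta C q x a = None then [] else pnu C q x a)\<rparr>"

lemma normC_simps[simp]: "pdelta (normC C) q x a = pdelta C q x a" "pQ (normC C) = pQ C" "pq0 (normC C) = pq0 C"
  "pc (normC C) = pc C"
  by (simp_all add: normC_def)

lemma lstep_normC[simp]: "lstep (normC C) = lstep C"
  by (rule ext) (auto simp: lstep_def split: list.splits option.splits)

lemma istep_normC[simp]: "istep (normC C) b = istep C b"
  by (rule ext) (auto simp: istep_def normC_def split: list.splits option.splits)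

lemma lclose_normC[simp]: "lclose (normC C) k cfg = lclose C k cfg"
  by (induction k arbitrary: cfg) (auto split: option.splits)

lemma runfrom_normC: "runfrom (normC C) cfg w = runfrom C cfg w"
  by (induction w arbitrary: cfg) (auto split: option.splits)

lemma beh_normC: "beh (normC C) = beh C"
  unfolding beh_def pd_out_def pd_state_def pd_run_def by (simp add: runfrom_normC)

definition Zset :: "pdc set" where
  "Zset = {C. finite (pQ C) \<and> (\<forall>q x a. q \<notin> pQ C \<longrightarrow> pdelta C q x a = None)
              \<and> (\<forall>q x a. pdelta C q x a = None \<longrightarrow> pnu C q x a = [])}"

definition allin :: "(bool option \<times> gamma) list" where
  "allin = List.product [None, Some False, Some True] [G0, G1, Z0]"

lemma allin_full: "(x, a) \<in> set allin"
  unfolding allin_def by (cases x; cases a) auto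

definition enc :: "pdc \<Rightarrow> nat list \<times> ((nat \<times> gamma list) option \<times> bool list) list \<times> nat \<times> nat" where
  "enc C = (sorted_list_of_set (pQ C),
     map (\<lambda>(q, x, a). (pdelta C q x a, pnu C q x a)) (List.product (sorted_list_of_set (pQ C)) allin),
     pq0 C, pc C)"

lemma inj_enc: "inj_on enc Zset"
proof (rule inj_onI)
  fix C1 C2 assume c1: "C1 \<in> Zset" and c2: "C2 \<in> Zset" and e: "enc C1 = enc C2"
  have f1: "finite (pQ C1)" and f2: "finite (pQ C2)" using c1 c2 unfolding Zset_def by auto
  have sl: "sorted_list_of_set (pQ C1) = sorted_list_of_set (pQ C2)" using e unfolding enc_def by simp
  then have Q: "pQ C1 = pQ C2" using f1 f2 by (metis set_sorted_list_of_set)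
  have m: "map (\<lambda>(q, x, a). (pdelta C1 q x a, pnu C1 q x a)) (List.product (sorted_list_of_set (pQ C1)) allin)
         = map (\<lambda>(q, x, a). (pdelta C2 q x a, pnu C2 q x a)) (List.product (sorted_list_of_set (pQ C1)) allin)"
    using e sl unfolding enc_def by simp
  have pt: "pdelta C1 q x a = pdelta C2 q x a \<and> pnu C1 q x a = pnu C2 q x a" for q x a
  proof (cases "q \<in> pQ C1")
    case True
    then have "(q, x, a) \<in> set (List.product (sorted_list_of_set (pQ C1)) allin)"
      using f1 allin_full by simp
    then show ?thesis using m unfolding map_eq_conv by fastforce
  next
    case False
    then show ?thesis using c1 c2 Q unfolding Zset_def by auto
  qed
  have PD: "pdelta C1 = pdelta C2" and PN: "pnu C1 = pnu C2" using pt by (auto intro!: ext)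
  have P0: "pq0 C1 = pq0 C2" and PC: "pc C1 = pc C2" using e unfolding enc_def by auto
  show "C1 = C2" by (rule pdc.equality) (simp_all add: Q PD PN P0 PC)
qed

lemma countable_Zset: "countable Zset"
  by (rule countable_image_inj_on[OF _ inj_enc]) simp

definition Ebeh :: "(bool list \<Rightarrow> bool list \<times> nat) set" where
  "Ebeh = beh ` {C. is_ILPDC C}"

lemma countable_Ebeh: "countable Ebeh"
proof -
  have "Ebeh \<subseteq> beh ` Zset"
  proof
    fix f assume "f \<in> Ebeh"
    then obtain C where C: "is_ILPDC C" "f = beh C" unfolding Ebeh_def by blast
    then have "is_pdc C" unfolding is_ILPDC_def by simp
    then have "normC C \<in> Zset" unfolding Zset_def is_pdc_def by (auto simp: normC_def)
    moreover have "f = beh (normC C)" using C beh_normC by simp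
    ultimately show "f \<in> beh ` Zset" by blast
  qed
  then show ?thesis using countable_Zset countable_subset by blast
qed

lemma Ebeh_props: "f \<in> Ebeh \<Longrightarrow> inj f \<and> finite (snd ` range f)"
proof -
  assume "f \<in> Ebeh"
  then obtain C where C: "is_ILPDC C" "f = beh C" unfolding Ebeh_def by blast
  have "snd ` range f \<subseteq> pQ C" using C pd_state_in unfolding beh_def is_ILPDC_def by auto
  moreover have "finite (pQ C)" using C unfolding is_ILPDC_def is_pdc_def by blast
  ultimately show ?thesis using C finite_subset unfolding is_ILPDC_def beh_def by blast
qed

definition en :: "nat \<Rightarrow> bool list \<Rightarrow> bool list \<times> nat" where
  "en i = from_nat_into Ebeh i"

lemma en_props: "inj (en i) \<and> finite (snd ` range (en i))"
proof -
  have "beh Cid \<in> Ebeh" unfolding Ebeh_def using ILUPDC_Cid unfolding is_ILUPDC_def by blast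
  then have "en i \<in> Ebeh" unfolding en_def by (metis empty_iff from_nat_into)
  then show ?thesis by (rule Ebeh_props)
qed

lemma en_surj: "is_ILPDC C \<Longrightarrow> \<exists>i. en i = beh C"
  unfolding en_def using from_nat_into_surj[OF countable_Ebeh] unfolding Ebeh_def by blast



lemma exists_R:
  fixes f :: "nat \<Rightarrow> bool list \<Rightarrow> bool list \<times> nat" and v :: "bool list" and s :: nat
  assumes fp: "\<And>i. inj (f i) \<and> finite (snd ` range (f i))"
  defines "Qs \<equiv> \<Sum>i\<le>s. card (snd ` range (f i))"
  defines "m \<equiv> (s+1) * (length v + (2*Qs + 1))"
  shows "\<exists>R. length R = m \<and> (\<forall>i\<le>s. s * (length v + m) < (s+1) * length (fst (f i (v @ R))))"
proof (rule ccontr)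
  assume na: "\<not> ?thesis"
  define p where "p = length v"
  define t where "t = 2*Qs + 1"
  define Lb where "Lb = s*(p+m) div (s+1)"
  define bad where "bad i = {R :: bool list. length R = m \<and> length (fst (f i (v@R))) < Lb + 1}" for i
  have all: "{R::bool list. length R = m} \<subseteq> (\<Union>i\<le>s. bad i)"
  proof
    fix R :: "bool list" assume "R \<in> {R. length R = m}"
    then have lR: "length R = m" by simp
    then obtain i where i: "i \<le> s" "\<not> s * (p + m) < (s+1) * length (fst (f i (v @ R)))"
      using na p_def by blast
    then have "length (fst (f i (v @ R))) * (s+1) \<le> s*(p+m)" by (simp add: mult.commute)
    then have "length (fst (f i (v @ R))) \<le> Lb" unfolding Lb_def
      by (simp add: less_eq_div_iff_mult_less_eq)
    then have "R \<in> bad i" using lR unfolding bad_def by simp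
    then show "R \<in> (\<Union>i\<le>s. bad i)" using i(1) by blast
  qed
  have cb: "card (bad i) \<le> 2^(Lb+1) * card (snd ` range (f i))" for i
  proof -
    let ?B = "{ob :: bool list. length ob < Lb + 1} \<times> snd ` range (f i)"
    have fB: "finite ?B" using fp[of i] finite_bl_lt by simp
    have inj: "inj_on (\<lambda>R. f i (v@R)) (bad i)"
      using fp[of i] by (auto simp: inj_on_def inj_def)
    have im: "(\<lambda>R. f i (v@R)) ` bad i \<subseteq> ?B"
    proof
      fix z assume "z \<in> (\<lambda>R. f i (v@R)) ` bad i"
      then obtain R where R: "R \<in> bad i" "z = f i (v@R)" by blast
      have "snd z \<in> snd ` range (f i)" using R(2) by simp
      moreover have "length (fst z) < Lb + 1" using R unfolding bad_def by simp
      ultimately show "z \<in> ?B" by (simp add: mem_Times_iff)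
    qed
    have "card (bad i) \<le> card ?B" by (rule card_inj_on_le[OF inj im fB])
    also have "\<dots> = card {ob :: bool list. length ob < Lb + 1} * card (snd ` range (f i))"
      by (simp add: card_cartesian_product)
    also have "\<dots> \<le> 2^(Lb+1) * card (snd ` range (f i))"
      using card_bl_lt[of "Lb+1"] by simp
    finally show ?thesis .
  qed
  have fbad: "finite (bad i)" for i
    by (rule finite_subset[OF _ finite_bl_eq[of m]]) (auto simp: bad_def)
  have "2^m = card {R::bool list. length R = m}" using card_bl_eq by simp
  also have "\<dots> \<le> card (\<Union>i\<le>s. bad i)" using all fbad by (intro card_mono) auto
  also have "\<dots> \<le> (\<Sum>i\<le>s. card (bad i))" by (rule card_UN_le) simp
  also have "\<dots> \<le> (\<Sum>i\<le>s. 2^(Lb+1) * card (snd ` range (f i)))" by (rule sum_mono) (rule cb)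
  also have "\<dots> = 2^Lb * (2 * Qs)" unfolding Qs_def by (simp add: sum_distrib_left mult.assoc mult.left_commute)
  also have "\<dots> < 2^Lb * 2^t" unfolding t_def
    using less_exp[of "2*Qs+1"] by simp
  also have "\<dots> \<le> 2^m"
  proof -
    have a: "Lb * (s+1) \<le> s*(p+m)" unfolding Lb_def by (rule div_times_less_eq_dividend)
    have m': "m = (s+1) * (p + t)" unfolding m_def p_def t_def by simp
    have e1: "(s+1) * (Lb + t) = Lb * (s+1) + (s+1)*t" by (simp add: algebra_simps)
    have e2: "s*(p+m) = s*p + s*m" by (simp add: algebra_simps)
    have e3: "(s+1) * m = s*m + (s+1)*p + (s+1)*t" using m' by (simp add: algebra_simps)
    have e4: "s*p \<le> (s+1)*p" by simp
    have "(s+1) * (Lb + t) \<le> (s+1) * m" using a e1 e2 e3 e4 by linarith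
    then have "Lb + t \<le> m" using mult_le_cancel1[of "s+1" "Lb+t" m] by (simp del: mult_Suc mult_Suc_right)
    then show ?thesis by (simp add: power_add[symmetric])
  qed
  finally show False by simp
qed



definition ellL :: "nat \<Rightarrow> nat" where "ellL L = (L+1) * (Bk L + 2)"
definition ccL :: "nat \<Rightarrow> nat" where "ccL L = ellL L - Bk L"
definition uL :: "nat \<Rightarrow> bool list" where
  "uL L = (SOME u. length u = ellL L \<and> hard L (ccL L) u)"

lemma ellL_ge: "Bk L + 2 \<le> ellL L" "L + 1 \<le> ellL L"
  unfolding ellL_def by simp_all

lemma uL_props: "length (uL L) = ellL L \<and> hard L (ccL L) (uL L)"
proof -
  have e: "Bk L + ccL L = ellL L" using ellL_ge(1)[of L] unfolding ccL_def by simp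
  have "L \<le> Bk L + ccL L" using e ellL_ge(2)[of L] by simp
  from exists_hard[OF this] have "\<exists>u. length u = ellL L \<and> hard L (ccL L) u" using e by simp
  then show ?thesis unfolding uL_def by (rule someI_ex)
qed

definition Qsum :: "nat \<Rightarrow> nat" where "Qsum s = (\<Sum>i\<le>s. card (snd ` range (en i)))"
definition mR :: "nat \<Rightarrow> bool list \<Rightarrow> nat" where "mR s v = (s+1) * (length v + (2 * Qsum s + 1))"
definition Rb :: "nat \<Rightarrow> bool list \<Rightarrow> bool list" where
  "Rb s v = (SOME R. length R = mR s v \<and> (\<forall>i\<le>s. s * (length v + mR s v) < (s+1) * length (fst (en i (v @ R)))))"

lemma Rb_props: "length (Rb s v) = mR s v \<and> (\<forall>i\<le>s. s * (length v + mR s v) < (s+1) * length (fst (en i (v @ Rb s v))))"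
proof -
  have "\<exists>R. length R = mR s v \<and> (\<forall>i\<le>s. s * (length v + mR s v) < (s+1) * length (fst (en i (v @ R))))"
    using exists_R[where f=en and v=v and s=s, OF en_props] unfolding mR_def Qsum_def by blast
  then show ?thesis unfolding Rb_def by (rule someI_ex)
qed

definition mid :: "nat \<Rightarrow> bool list \<Rightarrow> bool list" where "mid s v = v @ Rb s v"

fun PP :: "nat \<Rightarrow> bool list" where
  "PP 0 = []"
| "PP (Suc s) = mid s (PP s) @ concat (replicate (3 * length (mid s (PP s)) + 1) (uL (fst (prod_decode s))))"

definition SS :: "nat \<Rightarrow> bool" where "SS i = PP (Suc i) ! i"

lemma PP_step: "prefix (PP s) (mid s (PP s))" "prefix (mid s (PP s)) (PP (Suc s))"
  by (simp_all add: mid_def)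

lemma PP_len: "s \<le> length (PP s)"
proof (induction s)
  case (Suc s)
  have "length (uL (fst (prod_decode s))) \<ge> 1" using uL_props ellL_ge(2) by (metis le_add2 order_trans)
  then have "length (concat (replicate (3 * length (mid s (PP s)) + 1) (uL (fst (prod_decode s))))) \<ge> 1"
    by simp
  then show ?case using Suc by (simp add: mid_def)
qed simp

lemma PP_mono: "s \<le> t \<Longrightarrow> prefix (PP s) (PP t)"
proof (induction t)
  case 0 then show ?case by simp
next
  case (Suc t)
  show ?case
  proof (cases "s = Suc t")
    case False
    then have "prefix (PP s) (PP t)" using Suc by simp
    then show ?thesis using PP_step prefix_order.trans by blast
  qed simp
qed

lemma prefix_nth: "prefix xs ys \<Longrightarrow> i < length xs \<Longrightarrow> xs ! i = ys ! i"
  by (auto simp: prefix_def nth_append)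

lemma prefix_of_SS: "prefix w (PP t) \<Longrightarrow> prefix_of SS (length w) = w"
proof -
  assume w: "prefix w (PP t)"
  show ?thesis unfolding prefix_of_def
  proof (rule nth_equalityI)
    fix i assume "i < length (map SS [0..<length w])"
    then have i: "i < length w" by simp
    let ?M = "max (Suc i) t"
    have a: "prefix (PP (Suc i)) (PP ?M)" "prefix (PP t) (PP ?M)" by (intro PP_mono; simp)+
    have l1: "i < length (PP (Suc i))" using PP_len[of "Suc i"] by simp
    have "SS i = PP ?M ! i" unfolding SS_def using prefix_nth[OF a(1) l1] .
    also have "\<dots> = PP t ! i" using prefix_nth[OF a(2)] i prefix_length_le[OF w] by simp
    also have "\<dots> = w ! i" using prefix_nth[OF w i] by simp
    finally show "map SS [0..<length w] ! i = w ! i" using i by simp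
  qed simp
qed



lemma alpha_bound: "0 < (\<alpha>::real) \<Longrightarrow> nat \<lceil>1/\<alpha>\<rceil> \<le> L \<Longrightarrow> 1 \<le> \<alpha> * (real L + 1)"
proof -
  assume a: "0 < \<alpha>" "nat \<lceil>1/\<alpha>\<rceil> \<le> L"
  have "1/\<alpha> \<le> real L" using real_nat_ceiling_ge[of "1/\<alpha>"] a(2) by (meson of_nat_le_iff order_trans)
  then have "1 \<le> \<alpha> * real L" using a(1) by (simp add: field_simps)
  then show ?thesis using a(1) by (simp add: algebra_simps)
qed

lemma len_rep: "length (concat (replicate r u)) = r * length u"
  by (induction r) auto

theorem mainTheorem4:
  shows "\<exists>S :: nat \<Rightarrow> bool. \<forall>\<alpha> :: real. 0 < \<alpha> \<and> \<alpha> < 1 \<longrightarrow>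
           FS_depth_ge S (1 - \<alpha>) \<and> \<not> PD_depth_ge S \<alpha>"
proof (intro exI[of _ SS] allI impI conjI)
  fix \<alpha> :: real assume a: "0 < \<alpha> \<and> \<alpha> < 1"
  show "FS_depth_ge SS (1 - \<alpha>)" unfolding FS_depth_ge_def
  proof
    fix k
    define L where "L = max (max k 1) (nat \<lceil>1/\<alpha>\<rceil>)"
    have kL: "k \<le> L" and L1: "1 \<le> L" unfolding L_def by auto
    have aL: "1 \<le> \<alpha> * (real L + 1)" using alpha_bound[of \<alpha> L] a unfolding L_def by simp
    define u where "u = uL L"
    have lu: "length u = ellL L" and hu: "hard L (ccL L) u" using uL_props unfolding u_def by auto
    have Ku: "L \<le> length u" using lu ellL_ge(2)[of L] by simp
    show "\<exists>k'. \<exists>\<^sub>\<infinity>n. Dk k' (prefix_of SS n) + ereal ((1 - \<alpha>) * real n) \<le> Dk k (prefix_of SS n)"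
    proof (intro exI[of _ "length (descU u)"])
      show "\<exists>\<^sub>\<infinity>n. Dk (length (descU u)) (prefix_of SS n) + ereal ((1 - \<alpha>) * real n) \<le> Dk k (prefix_of SS n)"
        unfolding INFM_nat_le
      proof
        fix N0
        define s where "s = prod_encode (L, N0)"
        have lev: "fst (prod_decode s) = L" by (simp add: s_def)
        have sN: "N0 \<le> s" unfolding s_def by (rule le_prod_encode_2)
        define v where "v = mid s (PP s)"
        define r where "r = 3 * length v + 1"
        have PPs: "PP (Suc s) = v @ concat (replicate r u)" by (simp add: v_def r_def u_def lev)
        define n where "n = length (PP (Suc s))"
        have pre: "prefix_of SS n = v @ concat (replicate r u)"
        proof -
          have pp: "prefix_of SS (length (PP (Suc s))) = PP (Suc s)" by (rule prefix_of_SS) (rule prefix_order.refl)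
          then show ?thesis unfolding n_def using PPs by (simp del: PP.simps)
        qed
        have nN: "N0 \<le> n" using PP_len[of "Suc s"] sN unfolding n_def by simp
        have nval: "n = length v + r * ellL L" unfolding n_def PPs using lu by (simp add: len_rep)
        have low: "ereal (real (r * ccL L)) \<le> Dk k (v @ concat (replicate r u))"
          by (rule Dk_lower[OF hu Ku kL L1])
        have up: "Dk (length (descU u)) (v @ concat (replicate r u)) \<le> ereal (real (2 * length v + 1 + r))"
          by (rule Dk_upper)
        have ineq: "real (2 * length v + 1 + r) + (1-\<alpha>) * real n \<le> real (r * ccL L)"
        proof -
          define p where "p = length v"
          define B where "B = Bk L"
          define l where "l = ellL L"
          have lB: "B \<le> l" unfolding B_def l_def using ellL_ge(1)[of L] by simp
          have lval: "real l = (real L + 1) * (real B + 2)" unfolding l_def B_def ellL_def by (simp add: algebra_simps)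
          have "real B + 2 \<le> \<alpha> * (real L + 1) * (real B + 2)"
            using mult_right_mono[OF aL, of "real B + 2"] by simp
          then have "real B + 2 \<le> \<alpha> * real l" using lval by (simp add: algebra_simps)
          then have h1: "real r * (real B + 2) \<le> real r * (\<alpha> * real l)" by (rule mult_left_mono) simp
          have h2: "(1-\<alpha>) * (real p + real r * real l) = real p + real r * real l - \<alpha> * real p - \<alpha> * (real r * real l)"
            by (simp add: algebra_simps)
          have h3: "0 \<le> \<alpha> * real p" using a by simp
          have h4: "real r = 3 * real p + 1" unfolding r_def p_def by simp
          have h5: "real (r * ccL L) = real r * real l - real r * real B"
            unfolding ccL_def using lB by (simp add: l_def B_def of_nat_diff right_diff_distrib)
          have h6: "real n = real p + real r * real l" unfolding nval p_def l_def by simp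
          have h7: "real r * (\<alpha> * real l) = \<alpha> * (real r * real l)" by simp
          have h8: "real r * (real B + 2) = real r * real B + 2 * real r" by (simp add: algebra_simps)
          have h0: "real (2 * length v + 1 + r) = 2 * real p + 1 + real r" unfolding p_def by simp
          have h9: "(1-\<alpha>) * real n = real p + real r * real l - \<alpha> * real p - \<alpha> * (real r * real l)"
            unfolding h6 h2 ..
          show ?thesis using h0 h9 h1 h3 h4 h5 h7 h8 by linarith
        qed
        have "Dk (length (descU u)) (prefix_of SS n) + ereal ((1 - \<alpha>) * real n)
               \<le> ereal (real (2 * length v + 1 + r)) + ereal ((1 - \<alpha>) * real n)"
        proof -
          have up': "Dk (length (descU u)) (prefix_of SS n) \<le> ereal (real (2 * length v + 1 + r))"
            using up pre by simp
          then show ?thesis by (rule add_right_mono)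
        qed
        also have "\<dots> = ereal (real (2 * length v + 1 + r) + (1 - \<alpha>) * real n)" by simp
        also have "\<dots> \<le> ereal (real (r * ccL L))" using ineq by simp
        also have "\<dots> \<le> Dk k (prefix_of SS n)" using low pre by simp
        finally show "\<exists>n\<ge>N0. Dk (length (descU u)) (prefix_of SS n) + ereal ((1 - \<alpha>) * real n) \<le> Dk k (prefix_of SS n)"
          using nN by blast
      qed
    qed
  qed
  show "\<not> PD_depth_ge SS \<alpha>"
  proof
    assume "PD_depth_ge SS \<alpha>"
    then obtain C' where C': "is_ILPDC C'" and ev: "\<forall>\<^sub>F n in sequentially. \<alpha> * real n \<le>
        real (length (pd_out Cid (prefix_of SS n))) - real (length (pd_out C' (prefix_of SS n)))"
      using ILUPDC_Cid unfolding PD_depth_ge_def by blast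
    from ev obtain N0 where N0: "\<And>n. N0 \<le> n \<Longrightarrow> \<alpha> * real n \<le>
        real (length (pd_out Cid (prefix_of SS n))) - real (length (pd_out C' (prefix_of SS n)))"
      unfolding eventually_sequentially by blast
    obtain i where i: "en i = beh C'" using en_surj[OF C'] by blast
    define s where "s = max i (max N0 (nat \<lceil>1/\<alpha>\<rceil>))"
    have iS: "i \<le> s" and Ns: "N0 \<le> s" unfolding s_def by auto
    have cs: "nat \<lceil>1/\<alpha>\<rceil> \<le> s" unfolding s_def by (rule order_trans[OF _ max.cobounded2], rule max.cobounded2)
    have as: "1 \<le> \<alpha> * (real s + 1)" using alpha_bound[of \<alpha> s] a cs by blast
    define w where "w = mid s (PP s)"
    define n where "n = length w"
    have pre: "prefix_of SS n = w" using prefix_of_SS[of w "Suc s"] PP_step(2)[of s] unfolding n_def w_def by simp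
    have nN: "N0 \<le> n" using PP_len[of s] Ns unfolding n_def w_def mid_def by simp
    have nval: "n = length (PP s) + mR s (PP s)" unfolding n_def w_def mid_def using Rb_props by simp
    have "s * n < (s+1) * length (fst (en i w))" using Rb_props[of s "PP s"] iS unfolding nval w_def mid_def by blast
    then have lt: "s * n < (s+1) * length (pd_out C' w)" unfolding i beh_def by simp
    define ol where "ol = length (pd_out C' w)"
    have h1: "real s * real n < (real s + 1) * real ol" using lt unfolding ol_def
      by (metis of_nat_1 of_nat_add of_nat_less_iff of_nat_mult)
    have h2: "\<alpha> * real n \<le> real n - real ol" using N0[OF nN] unfolding pre ol_def pd_out_Cid by (simp add: n_def)
    have h3: "(real s + 1) * (\<alpha> * real n) \<le> (real s + 1) * (real n - real ol)"
      by (rule mult_left_mono[OF h2]) simp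
    have h4: "real n \<le> \<alpha> * (real s + 1) * real n" using mult_right_mono[OF as, of "real n"] by simp
    have h5: "(real s + 1) * (\<alpha> * real n) = \<alpha> * (real s + 1) * real n" by simp
    have h6: "(real s + 1) * (real n - real ol) = real s * real n + real n - (real s + 1) * real ol"
      by (simp add: algebra_simps)
    show False using h1 h3 h4 h5 h6 by linarith
  qed
qed

end
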